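(* (i) For every integer $q\in\{1,\dots,6\}$, the optimal value $A_q$ of the linear program in real variables $\omega_1,\dots,\omega_6,\chi$ — maximize $\frac{q}{q+1}\cdot\frac78\chi-\sum_{j=1}^q\frac{\omega_j}{j(j+1)}$ subject to $\omega_i\le\omega_{i+1}$ ($i=1,\dots,5$), $\chi-\omega_1\le1$, $2\chi-\omega_2-\omega_3\le1$, $3\chi-3\omega_5\le1$, $\chi\ge2$, $\omega_q\le\frac78\chi$ — satisfies $A_q\le\frac12$. (ii) For every pair of integers $(p,q)$ with $1\le p\le5$ and $p\le q\le10$, the optimal value $B_{p,q}$ of the linear program in real variables $\omega_1,\dots,\omega_{10},\chi$ — maximize $\frac1p+\left(\frac{q}{q+1}\cdot\frac78-\frac12\right)\chi-\sum_{j=p}^q\frac{\omega_j}{j(j+1)}$ subject to $\omega_i\le\omega_{i+1}$ ($i=1,\dots,9$), $\chi-\omega_1\le1$, $2\chi-\omega_2-\omega_3\le1$, $3\chi-\omega_3-\omega_4-\omega_5\le1$, $4\chi-4\omega_7\le1$, $\omega_{p-1}\le1$ (omitted when $p=1$), $\omega_p\ge1$, $\omega_q\le\frac78\chi$ — satisfies $B_{p,q}\le\frac12$. (iii) Consequently, for every edge-colored graph $H$, every feasible solution $x$ of the \textsc{MinECC} LP relaxation, and every edge $e$ with $x_e=\max_{w\in e}x_w^{\ell(e)}\in(\frac18,\frac34)$, the output $Y$ of GenColorRound applied to $x$ with $I=(\frac12,\frac78)$ satisfies $\Pr[e\in\mathcal M_Y]\le\frac43x_e$.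
   Context: An edge-colored graph is $H=(V,E,C,\ell)$ with colors $C=[k]$, $\ell\colon E\to C$, every edge a set of exactly two nodes. A node coloring $Y\colon V\to C$ makes a mistake at $e$ ($e\in\mathcal M_Y$) if some $w\in e$ has $Y[w]\ne\ell(e)$. The \textsc{MinECC} LP relaxation constraints: $\sum_{i=1}^k x_w^i=k-1$ for all $w\in V$; $x_e\ge x_w^{\ell(e)}$ for $w\in e$; $0\le x_w^i\le1$; $0\le x_e\le 1$. GenColorRound with interval $I$, applied to $x$: draw $\rho$ uniformly from $I$ and, independently, a uniformly random permutation $\pi$ of $[k]$; let $S_i=\{w: x_w^i<\rho\}$; for $w\in\bigcup_iS_i$ set $Y[w]=\pi(j)$ with $j$ the largest index such that $w\in S_{\pi(j)}$; other nodes get an arbitrary color. *)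

theory Defs
  imports "HOL-Probability.Probability" "HOL-Combinatorics.Permutations"
begin

definition edge_colored_graph :: "'v set \<Rightarrow> 'v set set \<Rightarrow> nat \<Rightarrow> ('v set \<Rightarrow> nat) \<Rightarrow> bool" where
  "edge_colored_graph V E k ell \<longleftrightarrow> finite V \<and> k \<ge> 1 \<and>
     (\<forall>e\<in>E. e \<subseteq> V \<and> card e = 2 \<and> ell e \<in> {1..k})"

text \<open>Feasibility for the MinECC LP relaxation; xv w i = x_w^i, xe e = x_e.\<close>
definition minecc_lp_feasible ::
  "'v set \<Rightarrow> 'v set set \<Rightarrow> nat \<Rightarrow> ('v set \<Rightarrow> nat) \<Rightarrow> ('v \<Rightarrow> nat \<Rightarrow> real) \<Rightarrow> ('v set \<Rightarrow> real) \<Rightarrow> bool" where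
  "minecc_lp_feasible V E k ell xv xe \<longleftrightarrow>
     (\<forall>w\<in>V. (\<Sum>i=1..k. xv w i) = real k - 1) \<and>
     (\<forall>e\<in>E. \<forall>w\<in>e. xe e \<ge> xv w (ell e)) \<and>
     (\<forall>w\<in>V. \<forall>i\<in>{1..k}. 0 \<le> xv w i \<and> xv w i \<le> 1) \<and>
     (\<forall>e\<in>E. 0 \<le> xe e \<and> xe e \<le> 1)"

text \<open>GenColorRound output for threshold rho and permutation prm of {1..k};
  S_i = {w. xv w i < rho}; nodes in no S_i receive the arbitrary color dflt rho prm w.\<close>
definition gcr_color ::
  "nat \<Rightarrow> ('v \<Rightarrow> nat \<Rightarrow> real) \<Rightarrow> (real \<Rightarrow> (nat \<Rightarrow> nat) \<Rightarrow> 'v \<Rightarrow> nat) \<Rightarrow> real \<Rightarrow> (nat \<Rightarrow> nat) \<Rightarrow> 'v \<Rightarrow> nat" where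
  "gcr_color k xv dflt rho prm w =
     (if \<exists>i\<in>{1..k}. xv w i < rho
      then prm (GREATEST j. j \<in> {1..k} \<and> xv w (prm j) < rho)
      else dflt rho prm w)"

definition mistake :: "('v \<Rightarrow> nat) \<Rightarrow> ('v set \<Rightarrow> nat) \<Rightarrow> 'v set \<Rightarrow> bool" where
  "mistake Y ell e \<longleftrightarrow> (\<exists>w\<in>e. Y w \<noteq> ell e)"

definition gcr_space :: "real \<Rightarrow> real \<Rightarrow> nat \<Rightarrow> (real \<times> (nat \<Rightarrow> nat)) measure" where
  "gcr_space a b k = uniform_measure lborel {a<..<b} \<Otimes>\<^sub>M uniform_count_measure {prm. prm permutes {1..k}}"

definition gcr_mistake_prob ::
  "real \<Rightarrow> real \<Rightarrow> nat \<Rightarrow> ('v \<Rightarrow> nat \<Rightarrow> real) \<Rightarrow> (real \<Rightarrow> (nat \<Rightarrow> nat) \<Rightarrow> 'v \<Rightarrow> nat) \<Rightarrow> ('v set \<Rightarrow> nat) \<Rightarrow> 'v set \<Rightarrow> real" where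
  "gcr_mistake_prob a b k xv dflt ell e =
     measure (gcr_space a b k)
       {(rho, prm) \<in> space (gcr_space a b k). mistake (gcr_color k xv dflt rho prm) ell e}"

definition lpA_feasible :: "nat \<Rightarrow> (nat \<Rightarrow> real) \<Rightarrow> real \<Rightarrow> bool" where
  "lpA_feasible q w chi \<longleftrightarrow>
     (\<forall>i\<in>{1..5}. w i \<le> w (i+1)) \<and> chi - w 1 \<le> 1 \<and> 2*chi - w 2 - w 3 \<le> 1 \<and>
     3*chi - 3* w 5 \<le> 1 \<and> chi \<ge> 2 \<and> w q \<le> 7/8 * chi"

definition lpA_obj :: "nat \<Rightarrow> (nat \<Rightarrow> real) \<Rightarrow> real \<Rightarrow> real" where
  "lpA_obj q w chi = real q / (real q + 1) * (7/8) * chi - (\<Sum>j=1..q. w j / (real j * (real j + 1)))"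

definition lpB_feasible :: "nat \<Rightarrow> nat \<Rightarrow> (nat \<Rightarrow> real) \<Rightarrow> real \<Rightarrow> bool" where
  "lpB_feasible p q w chi \<longleftrightarrow>
     (\<forall>i\<in>{1..9}. w i \<le> w (i+1)) \<and> chi - w 1 \<le> 1 \<and> 2*chi - w 2 - w 3 \<le> 1 \<and>
     3*chi - w 3 - w 4 - w 5 \<le> 1 \<and> 4*chi - 4* w 7 \<le> 1 \<and>
     (p \<noteq> 1 \<longrightarrow> w (p-1) \<le> 1) \<and> w p \<ge> 1 \<and> w q \<le> 7/8 * chi"

definition lpB_obj :: "nat \<Rightarrow> nat \<Rightarrow> (nat \<Rightarrow> real) \<Rightarrow> real \<Rightarrow> real" where
  "lpB_obj p q w chi = 1 / real p + (real q / (real q + 1) * (7/8) - 1/2) * chi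
      - (\<Sum>j=p..q. w j / (real j * (real j + 1)))"

end

theory Submission
  imports Defs
begin

lemma ch5: "(\<forall>i\<in>{1..5::nat}. w i \<le> (w (i+1)::real)) \<longleftrightarrow> w 1 \<le> w 2 \<and> w 2 \<le> w 3 \<and> w 3 \<le> w 4 \<and> w 4 \<le> w 5 \<and> w 5 \<le> w 6"
proof
  assume b: "\<forall>i\<in>{1..5::nat}. w i \<le> (w (i+1)::real)"
  have "w 1 \<le> w (1+1)" "w 2 \<le> w (2+1)" "w 3 \<le> w (3+1)" "w 4 \<le> w (4+1)" "w 5 \<le> w (5+1)"
    by (rule b[rule_format]; simp)+
  then show "w 1 \<le> w 2 \<and> w 2 \<le> w 3 \<and> w 3 \<le> w 4 \<and> w 4 \<le> w 5 \<and> w 5 \<le> w 6"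
    by (simp only: one_add_one numeral_plus_one add_num_simps)
next
  assume "w 1 \<le> w 2 \<and> w 2 \<le> w 3 \<and> w 3 \<le> w 4 \<and> w 4 \<le> w 5 \<and> w 5 \<le> w 6"
  then show "\<forall>i\<in>{1..5::nat}. w i \<le> (w (i+1)::real)"
    by (auto simp: Ball_def eval_nat_numeral le_Suc_eq)
qed
lemma ch9: "(\<forall>i\<in>{1..9::nat}. w i \<le> (w (i+1)::real)) \<longleftrightarrow> w 1 \<le> w 2 \<and> w 2 \<le> w 3 \<and> w 3 \<le> w 4 \<and> w 4 \<le> w 5 \<and> w 5 \<le> w 6 \<and> w 6 \<le> w 7 \<and> w 7 \<le> w 8 \<and> w 8 \<le> w 9 \<and> w 9 \<le> w 10"
proof
  assume b: "\<forall>i\<in>{1..9::nat}. w i \<le> (w (i+1)::real)"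
  have "w 1 \<le> w (1+1)" "w 2 \<le> w (2+1)" "w 3 \<le> w (3+1)" "w 4 \<le> w (4+1)" "w 5 \<le> w (5+1)" "w 6 \<le> w (6+1)" "w 7 \<le> w (7+1)" "w 8 \<le> w (8+1)" "w 9 \<le> w (9+1)"
    by (rule b[rule_format]; simp)+
  then show "w 1 \<le> w 2 \<and> w 2 \<le> w 3 \<and> w 3 \<le> w 4 \<and> w 4 \<le> w 5 \<and> w 5 \<le> w 6 \<and> w 6 \<le> w 7 \<and> w 7 \<le> w 8 \<and> w 8 \<le> w 9 \<and> w 9 \<le> w 10"
    by (simp only: one_add_one numeral_plus_one add_num_simps)
next
  assume "w 1 \<le> w 2 \<and> w 2 \<le> w 3 \<and> w 3 \<le> w 4 \<and> w 4 \<le> w 5 \<and> w 5 \<le> w 6 \<and> w 6 \<le> w 7 \<and> w 7 \<le> w 8 \<and> w 8 \<le> w 9 \<and> w 9 \<le> w 10"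
  then show "\<forall>i\<in>{1..9::nat}. w i \<le> (w (i+1)::real)"
    by (auto simp: Ball_def eval_nat_numeral le_Suc_eq)
qed
lemma sA1: "{1..1::nat} = {1}" unfolding set_eq_iff by (simp; presburger)
lemma oA1: "lpA_obj 1 w chi = (7/16) * chi - (w 1 * (1/2))"
  unfolding lpA_obj_def sA1 by simp
lemma lpA1: "lpA_feasible 1 w chi \<Longrightarrow> lpA_obj 1 w chi \<le> 1/2"
  unfolding lpA_feasible_def ch5 oA1 by (elim conjE) linarith
lemma sA2: "{1..2::nat} = {1,2}" unfolding set_eq_iff by (simp; presburger)
lemma oA2: "lpA_obj 2 w chi = (7/12) * chi - (w 1 * (1/2) + w 2 * (1/6))"
  unfolding lpA_obj_def sA2 by simp
lemma lpA2: "lpA_feasible 2 w chi \<Longrightarrow> lpA_obj 2 w chi \<le> 1/2"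
  unfolding lpA_feasible_def ch5 oA2 by (elim conjE) linarith
lemma sA3: "{1..3::nat} = {1,2,3}" unfolding set_eq_iff by (simp; presburger)
lemma oA3: "lpA_obj 3 w chi = (21/32) * chi - (w 1 * (1/2) + w 2 * (1/6) + w 3 * (1/12))"
  unfolding lpA_obj_def sA3 by simp
lemma lpA3: "lpA_feasible 3 w chi \<Longrightarrow> lpA_obj 3 w chi \<le> 1/2"
  unfolding lpA_feasible_def ch5 oA3 by (elim conjE) linarith
lemma sA4: "{1..4::nat} = {1,2,3,4}" unfolding set_eq_iff by (simp; presburger)
lemma oA4: "lpA_obj 4 w chi = (7/10) * chi - (w 1 * (1/2) + w 2 * (1/6) + w 3 * (1/12) + w 4 * (1/20))"
  unfolding lpA_obj_def sA4 by simp
lemma lpA4: "lpA_feasible 4 w chi \<Longrightarrow> lpA_obj 4 w chi \<le> 1/2"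
  unfolding lpA_feasible_def ch5 oA4 by (elim conjE) linarith
lemma sA5: "{1..5::nat} = {1,2,3,4,5}" unfolding set_eq_iff by (simp; presburger)
lemma oA5: "lpA_obj 5 w chi = (35/48) * chi - (w 1 * (1/2) + w 2 * (1/6) + w 3 * (1/12) + w 4 * (1/20) + w 5 * (1/30))"
  unfolding lpA_obj_def sA5 by simp
lemma lpA5: "lpA_feasible 5 w chi \<Longrightarrow> lpA_obj 5 w chi \<le> 1/2"
  unfolding lpA_feasible_def ch5 oA5 by (elim conjE) linarith
lemma sA6: "{1..6::nat} = {1,2,3,4,5,6}" unfolding set_eq_iff by (simp; presburger)
lemma oA6: "lpA_obj 6 w chi = (3/4) * chi - (w 1 * (1/2) + w 2 * (1/6) + w 3 * (1/12) + w 4 * (1/20) + w 5 * (1/30) + w 6 * (1/42))"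
  unfolding lpA_obj_def sA6 by simp
lemma lpA6: "lpA_feasible 6 w chi \<Longrightarrow> lpA_obj 6 w chi \<le> 1/2"
  unfolding lpA_feasible_def ch5 oA6 by (elim conjE) linarith
lemma s1_1: "{1..1::nat} = {1}" unfolding set_eq_iff by (simp; presburger)
lemma oB1_1: "lpB_obj 1 1 w chi = (1/1) + (-1/16) * chi - (w 1 * (1/2))"
  unfolding lpB_obj_def s1_1 by simp
lemma pe1: "((1::nat) \<noteq> 1) = False" by simp
lemma lpB1_1: "lpB_feasible 1 1 w chi \<Longrightarrow> lpB_obj 1 1 w chi \<le> 1/2"
  unfolding lpB_feasible_def ch9 oB1_1 by (simp only: pe1 simp_thms; elim conjE; linarith)
lemma s1_2: "{1..2::nat} = {1,2}" unfolding set_eq_iff by (simp; presburger)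
lemma oB1_2: "lpB_obj 1 2 w chi = (1/1) + (1/12) * chi - (w 1 * (1/2) + w 2 * (1/6))"
  unfolding lpB_obj_def s1_2 by simp
lemma lpB1_2: "lpB_feasible 1 2 w chi \<Longrightarrow> lpB_obj 1 2 w chi \<le> 1/2"
  unfolding lpB_feasible_def ch9 oB1_2 by (simp only: pe1 simp_thms; elim conjE; linarith)
lemma s1_3: "{1..3::nat} = {1,2,3}" unfolding set_eq_iff by (simp; presburger)
lemma oB1_3: "lpB_obj 1 3 w chi = (1/1) + (5/32) * chi - (w 1 * (1/2) + w 2 * (1/6) + w 3 * (1/12))"
  unfolding lpB_obj_def s1_3 by simp
lemma lpB1_3: "lpB_feasible 1 3 w chi \<Longrightarrow> lpB_obj 1 3 w chi \<le> 1/2"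
  unfolding lpB_feasible_def ch9 oB1_3 by (simp only: pe1 simp_thms; elim conjE; linarith)
lemma s1_4: "{1..4::nat} = {1,2,3,4}" unfolding set_eq_iff by (simp; presburger)
lemma oB1_4: "lpB_obj 1 4 w chi = (1/1) + (1/5) * chi - (w 1 * (1/2) + w 2 * (1/6) + w 3 * (1/12) + w 4 * (1/20))"
  unfolding lpB_obj_def s1_4 by simp
lemma lpB1_4: "lpB_feasible 1 4 w chi \<Longrightarrow> lpB_obj 1 4 w chi \<le> 1/2"
  unfolding lpB_feasible_def ch9 oB1_4 by (simp only: pe1 simp_thms; elim conjE; linarith)
lemma s1_5: "{1..5::nat} = {1,2,3,4,5}" unfolding set_eq_iff by (simp; presburger)
lemma oB1_5: "lpB_obj 1 5 w chi = (1/1) + (11/48) * chi - (w 1 * (1/2) + w 2 * (1/6) + w 3 * (1/12) + w 4 * (1/20) + w 5 * (1/30))"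
  unfolding lpB_obj_def s1_5 by simp
lemma lpB1_5: "lpB_feasible 1 5 w chi \<Longrightarrow> lpB_obj 1 5 w chi \<le> 1/2"
  unfolding lpB_feasible_def ch9 oB1_5 by (simp only: pe1 simp_thms; elim conjE; linarith)
lemma s1_6: "{1..6::nat} = {1,2,3,4,5,6}" unfolding set_eq_iff by (simp; presburger)
lemma oB1_6: "lpB_obj 1 6 w chi = (1/1) + (1/4) * chi - (w 1 * (1/2) + w 2 * (1/6) + w 3 * (1/12) + w 4 * (1/20) + w 5 * (1/30) + w 6 * (1/42))"
  unfolding lpB_obj_def s1_6 by simp
lemma lpB1_6: "lpB_feasible 1 6 w chi \<Longrightarrow> lpB_obj 1 6 w chi \<le> 1/2"
  unfolding lpB_feasible_def ch9 oB1_6 by (simp only: pe1 simp_thms; elim conjE; linarith)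
lemma s1_7: "{1..7::nat} = {1,2,3,4,5,6,7}" unfolding set_eq_iff by (simp; presburger)
lemma oB1_7: "lpB_obj 1 7 w chi = (1/1) + (17/64) * chi - (w 1 * (1/2) + w 2 * (1/6) + w 3 * (1/12) + w 4 * (1/20) + w 5 * (1/30) + w 6 * (1/42) + w 7 * (1/56))"
  unfolding lpB_obj_def s1_7 by simp
lemma lpB1_7: "lpB_feasible 1 7 w chi \<Longrightarrow> lpB_obj 1 7 w chi \<le> 1/2"
  unfolding lpB_feasible_def ch9 oB1_7 by (simp only: pe1 simp_thms; elim conjE; linarith)
lemma s1_8: "{1..8::nat} = {1,2,3,4,5,6,7,8}" unfolding set_eq_iff by (simp; presburger)
lemma oB1_8: "lpB_obj 1 8 w chi = (1/1) + (5/18) * chi - (w 1 * (1/2) + w 2 * (1/6) + w 3 * (1/12) + w 4 * (1/20) + w 5 * (1/30) + w 6 * (1/42) + w 7 * (1/56) + w 8 * (1/72))"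
  unfolding lpB_obj_def s1_8 by simp
lemma lpB1_8: "lpB_feasible 1 8 w chi \<Longrightarrow> lpB_obj 1 8 w chi \<le> 1/2"
  unfolding lpB_feasible_def ch9 oB1_8 by (simp only: pe1 simp_thms; elim conjE; linarith)
lemma s1_9: "{1..9::nat} = {1,2,3,4,5,6,7,8,9}" unfolding set_eq_iff by (simp; presburger)
lemma oB1_9: "lpB_obj 1 9 w chi = (1/1) + (23/80) * chi - (w 1 * (1/2) + w 2 * (1/6) + w 3 * (1/12) + w 4 * (1/20) + w 5 * (1/30) + w 6 * (1/42) + w 7 * (1/56) + w 8 * (1/72) + w 9 * (1/90))"
  unfolding lpB_obj_def s1_9 by simp
lemma lpB1_9: "lpB_feasible 1 9 w chi \<Longrightarrow> lpB_obj 1 9 w chi \<le> 1/2"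
  unfolding lpB_feasible_def ch9 oB1_9 by (simp only: pe1 simp_thms; elim conjE; linarith)
lemma s1_10: "{1..10::nat} = {1,2,3,4,5,6,7,8,9,10}" unfolding set_eq_iff by (simp; presburger)
lemma oB1_10: "lpB_obj 1 10 w chi = (1/1) + (13/44) * chi - (w 1 * (1/2) + w 2 * (1/6) + w 3 * (1/12) + w 4 * (1/20) + w 5 * (1/30) + w 6 * (1/42) + w 7 * (1/56) + w 8 * (1/72) + w 9 * (1/90) + w 10 * (1/110))"
  unfolding lpB_obj_def s1_10 by simp
lemma lpB1_10: "lpB_feasible 1 10 w chi \<Longrightarrow> lpB_obj 1 10 w chi \<le> 1/2"
  unfolding lpB_feasible_def ch9 oB1_10 by (simp only: pe1 simp_thms; elim conjE; linarith)
lemma s2_2: "{2..2::nat} = {2}" unfolding set_eq_iff by (simp; presburger)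
lemma oB2_2: "lpB_obj 2 2 w chi = (1/2) + (1/12) * chi - (w 2 * (1/6))"
  unfolding lpB_obj_def s2_2 by simp
lemma pe2: "(((2::nat) \<noteq> 1) = True)" "(2::nat) - 1 = 1" by simp_all
lemma lpB2_2: "lpB_feasible 2 2 w chi \<Longrightarrow> lpB_obj 2 2 w chi \<le> 1/2"
  unfolding lpB_feasible_def ch9 oB2_2 by (simp only: pe2 simp_thms; elim conjE; linarith)
lemma s2_3: "{2..3::nat} = {2,3}" unfolding set_eq_iff by (simp; presburger)
lemma oB2_3: "lpB_obj 2 3 w chi = (1/2) + (5/32) * chi - (w 2 * (1/6) + w 3 * (1/12))"
  unfolding lpB_obj_def s2_3 by simp
lemma lpB2_3: "lpB_feasible 2 3 w chi \<Longrightarrow> lpB_obj 2 3 w chi \<le> 1/2"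
  unfolding lpB_feasible_def ch9 oB2_3 by (simp only: pe2 simp_thms; elim conjE; linarith)
lemma s2_4: "{2..4::nat} = {2,3,4}" unfolding set_eq_iff by (simp; presburger)
lemma oB2_4: "lpB_obj 2 4 w chi = (1/2) + (1/5) * chi - (w 2 * (1/6) + w 3 * (1/12) + w 4 * (1/20))"
  unfolding lpB_obj_def s2_4 by simp
lemma lpB2_4: "lpB_feasible 2 4 w chi \<Longrightarrow> lpB_obj 2 4 w chi \<le> 1/2"
  unfolding lpB_feasible_def ch9 oB2_4 by (simp only: pe2 simp_thms; elim conjE; linarith)
lemma s2_5: "{2..5::nat} = {2,3,4,5}" unfolding set_eq_iff by (simp; presburger)
lemma oB2_5: "lpB_obj 2 5 w chi = (1/2) + (11/48) * chi - (w 2 * (1/6) + w 3 * (1/12) + w 4 * (1/20) + w 5 * (1/30))"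
  unfolding lpB_obj_def s2_5 by simp
lemma lpB2_5: "lpB_feasible 2 5 w chi \<Longrightarrow> lpB_obj 2 5 w chi \<le> 1/2"
  unfolding lpB_feasible_def ch9 oB2_5 by (simp only: pe2 simp_thms; elim conjE; linarith)
lemma s2_6: "{2..6::nat} = {2,3,4,5,6}" unfolding set_eq_iff by (simp; presburger)
lemma oB2_6: "lpB_obj 2 6 w chi = (1/2) + (1/4) * chi - (w 2 * (1/6) + w 3 * (1/12) + w 4 * (1/20) + w 5 * (1/30) + w 6 * (1/42))"
  unfolding lpB_obj_def s2_6 by simp
lemma lpB2_6: "lpB_feasible 2 6 w chi \<Longrightarrow> lpB_obj 2 6 w chi \<le> 1/2"
  unfolding lpB_feasible_def ch9 oB2_6 by (simp only: pe2 simp_thms; elim conjE; linarith)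
lemma s2_7: "{2..7::nat} = {2,3,4,5,6,7}" unfolding set_eq_iff by (simp; presburger)
lemma oB2_7: "lpB_obj 2 7 w chi = (1/2) + (17/64) * chi - (w 2 * (1/6) + w 3 * (1/12) + w 4 * (1/20) + w 5 * (1/30) + w 6 * (1/42) + w 7 * (1/56))"
  unfolding lpB_obj_def s2_7 by simp
lemma lpB2_7: "lpB_feasible 2 7 w chi \<Longrightarrow> lpB_obj 2 7 w chi \<le> 1/2"
  unfolding lpB_feasible_def ch9 oB2_7 by (simp only: pe2 simp_thms; elim conjE; linarith)
lemma s2_8: "{2..8::nat} = {2,3,4,5,6,7,8}" unfolding set_eq_iff by (simp; presburger)
lemma oB2_8: "lpB_obj 2 8 w chi = (1/2) + (5/18) * chi - (w 2 * (1/6) + w 3 * (1/12) + w 4 * (1/20) + w 5 * (1/30) + w 6 * (1/42) + w 7 * (1/56) + w 8 * (1/72))"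
  unfolding lpB_obj_def s2_8 by simp
lemma lpB2_8: "lpB_feasible 2 8 w chi \<Longrightarrow> lpB_obj 2 8 w chi \<le> 1/2"
  unfolding lpB_feasible_def ch9 oB2_8 by (simp only: pe2 simp_thms; elim conjE; linarith)
lemma s2_9: "{2..9::nat} = {2,3,4,5,6,7,8,9}" unfolding set_eq_iff by (simp; presburger)
lemma oB2_9: "lpB_obj 2 9 w chi = (1/2) + (23/80) * chi - (w 2 * (1/6) + w 3 * (1/12) + w 4 * (1/20) + w 5 * (1/30) + w 6 * (1/42) + w 7 * (1/56) + w 8 * (1/72) + w 9 * (1/90))"
  unfolding lpB_obj_def s2_9 by simp
lemma lpB2_9: "lpB_feasible 2 9 w chi \<Longrightarrow> lpB_obj 2 9 w chi \<le> 1/2"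
  unfolding lpB_feasible_def ch9 oB2_9 by (simp only: pe2 simp_thms; elim conjE; linarith)
lemma s2_10: "{2..10::nat} = {2,3,4,5,6,7,8,9,10}" unfolding set_eq_iff by (simp; presburger)
lemma oB2_10: "lpB_obj 2 10 w chi = (1/2) + (13/44) * chi - (w 2 * (1/6) + w 3 * (1/12) + w 4 * (1/20) + w 5 * (1/30) + w 6 * (1/42) + w 7 * (1/56) + w 8 * (1/72) + w 9 * (1/90) + w 10 * (1/110))"
  unfolding lpB_obj_def s2_10 by simp
lemma lpB2_10: "lpB_feasible 2 10 w chi \<Longrightarrow> lpB_obj 2 10 w chi \<le> 1/2"
  unfolding lpB_feasible_def ch9 oB2_10 by (simp only: pe2 simp_thms; elim conjE; linarith)
lemma s3_3: "{3..3::nat} = {3}" unfolding set_eq_iff by (simp; presburger)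
lemma oB3_3: "lpB_obj 3 3 w chi = (1/3) + (5/32) * chi - (w 3 * (1/12))"
  unfolding lpB_obj_def s3_3 by simp
lemma pe3: "(((3::nat) \<noteq> 1) = True)" "(3::nat) - 1 = 2" by simp_all
lemma lpB3_3: "lpB_feasible 3 3 w chi \<Longrightarrow> lpB_obj 3 3 w chi \<le> 1/2"
  unfolding lpB_feasible_def ch9 oB3_3 by (simp only: pe3 simp_thms; elim conjE; linarith)
lemma s3_4: "{3..4::nat} = {3,4}" unfolding set_eq_iff by (simp; presburger)
lemma oB3_4: "lpB_obj 3 4 w chi = (1/3) + (1/5) * chi - (w 3 * (1/12) + w 4 * (1/20))"
  unfolding lpB_obj_def s3_4 by simp
lemma lpB3_4: "lpB_feasible 3 4 w chi \<Longrightarrow> lpB_obj 3 4 w chi \<le> 1/2"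
  unfolding lpB_feasible_def ch9 oB3_4 by (simp only: pe3 simp_thms; elim conjE; linarith)
lemma s3_5: "{3..5::nat} = {3,4,5}" unfolding set_eq_iff by (simp; presburger)
lemma oB3_5: "lpB_obj 3 5 w chi = (1/3) + (11/48) * chi - (w 3 * (1/12) + w 4 * (1/20) + w 5 * (1/30))"
  unfolding lpB_obj_def s3_5 by simp
lemma lpB3_5: "lpB_feasible 3 5 w chi \<Longrightarrow> lpB_obj 3 5 w chi \<le> 1/2"
  unfolding lpB_feasible_def ch9 oB3_5 by (simp only: pe3 simp_thms; elim conjE; linarith)
lemma s3_6: "{3..6::nat} = {3,4,5,6}" unfolding set_eq_iff by (simp; presburger)
lemma oB3_6: "lpB_obj 3 6 w chi = (1/3) + (1/4) * chi - (w 3 * (1/12) + w 4 * (1/20) + w 5 * (1/30) + w 6 * (1/42))"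
  unfolding lpB_obj_def s3_6 by simp
lemma lpB3_6: "lpB_feasible 3 6 w chi \<Longrightarrow> lpB_obj 3 6 w chi \<le> 1/2"
  unfolding lpB_feasible_def ch9 oB3_6 by (simp only: pe3 simp_thms; elim conjE; linarith)
lemma s3_7: "{3..7::nat} = {3,4,5,6,7}" unfolding set_eq_iff by (simp; presburger)
lemma oB3_7: "lpB_obj 3 7 w chi = (1/3) + (17/64) * chi - (w 3 * (1/12) + w 4 * (1/20) + w 5 * (1/30) + w 6 * (1/42) + w 7 * (1/56))"
  unfolding lpB_obj_def s3_7 by simp
lemma lpB3_7: "lpB_feasible 3 7 w chi \<Longrightarrow> lpB_obj 3 7 w chi \<le> 1/2"
  unfolding lpB_feasible_def ch9 oB3_7 by (simp only: pe3 simp_thms; elim conjE; linarith)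
lemma s3_8: "{3..8::nat} = {3,4,5,6,7,8}" unfolding set_eq_iff by (simp; presburger)
lemma oB3_8: "lpB_obj 3 8 w chi = (1/3) + (5/18) * chi - (w 3 * (1/12) + w 4 * (1/20) + w 5 * (1/30) + w 6 * (1/42) + w 7 * (1/56) + w 8 * (1/72))"
  unfolding lpB_obj_def s3_8 by simp
lemma lpB3_8: "lpB_feasible 3 8 w chi \<Longrightarrow> lpB_obj 3 8 w chi \<le> 1/2"
  unfolding lpB_feasible_def ch9 oB3_8 by (simp only: pe3 simp_thms; elim conjE; linarith)
lemma s3_9: "{3..9::nat} = {3,4,5,6,7,8,9}" unfolding set_eq_iff by (simp; presburger)
lemma oB3_9: "lpB_obj 3 9 w chi = (1/3) + (23/80) * chi - (w 3 * (1/12) + w 4 * (1/20) + w 5 * (1/30) + w 6 * (1/42) + w 7 * (1/56) + w 8 * (1/72) + w 9 * (1/90))"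
  unfolding lpB_obj_def s3_9 by simp
lemma lpB3_9: "lpB_feasible 3 9 w chi \<Longrightarrow> lpB_obj 3 9 w chi \<le> 1/2"
  unfolding lpB_feasible_def ch9 oB3_9 by (simp only: pe3 simp_thms; elim conjE; linarith)
lemma s3_10: "{3..10::nat} = {3,4,5,6,7,8,9,10}" unfolding set_eq_iff by (simp; presburger)
lemma oB3_10: "lpB_obj 3 10 w chi = (1/3) + (13/44) * chi - (w 3 * (1/12) + w 4 * (1/20) + w 5 * (1/30) + w 6 * (1/42) + w 7 * (1/56) + w 8 * (1/72) + w 9 * (1/90) + w 10 * (1/110))"
  unfolding lpB_obj_def s3_10 by simp
lemma lpB3_10: "lpB_feasible 3 10 w chi \<Longrightarrow> lpB_obj 3 10 w chi \<le> 1/2"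
  unfolding lpB_feasible_def ch9 oB3_10 by (simp only: pe3 simp_thms; elim conjE; linarith)
lemma s4_4: "{4..4::nat} = {4}" unfolding set_eq_iff by (simp; presburger)
lemma oB4_4: "lpB_obj 4 4 w chi = (1/4) + (1/5) * chi - (w 4 * (1/20))"
  unfolding lpB_obj_def s4_4 by simp
lemma pe4: "(((4::nat) \<noteq> 1) = True)" "(4::nat) - 1 = 3" by simp_all
lemma lpB4_4: "lpB_feasible 4 4 w chi \<Longrightarrow> lpB_obj 4 4 w chi \<le> 1/2"
  unfolding lpB_feasible_def ch9 oB4_4 by (simp only: pe4 simp_thms; elim conjE; linarith)
lemma s4_5: "{4..5::nat} = {4,5}" unfolding set_eq_iff by (simp; presburger)
lemma oB4_5: "lpB_obj 4 5 w chi = (1/4) + (11/48) * chi - (w 4 * (1/20) + w 5 * (1/30))"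
  unfolding lpB_obj_def s4_5 by simp
lemma lpB4_5: "lpB_feasible 4 5 w chi \<Longrightarrow> lpB_obj 4 5 w chi \<le> 1/2"
  unfolding lpB_feasible_def ch9 oB4_5 by (simp only: pe4 simp_thms; elim conjE; linarith)
lemma s4_6: "{4..6::nat} = {4,5,6}" unfolding set_eq_iff by (simp; presburger)
lemma oB4_6: "lpB_obj 4 6 w chi = (1/4) + (1/4) * chi - (w 4 * (1/20) + w 5 * (1/30) + w 6 * (1/42))"
  unfolding lpB_obj_def s4_6 by simp
lemma lpB4_6: "lpB_feasible 4 6 w chi \<Longrightarrow> lpB_obj 4 6 w chi \<le> 1/2"
  unfolding lpB_feasible_def ch9 oB4_6 by (simp only: pe4 simp_thms; elim conjE; linarith)
lemma s4_7: "{4..7::nat} = {4,5,6,7}" unfolding set_eq_iff by (simp; presburger)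
lemma oB4_7: "lpB_obj 4 7 w chi = (1/4) + (17/64) * chi - (w 4 * (1/20) + w 5 * (1/30) + w 6 * (1/42) + w 7 * (1/56))"
  unfolding lpB_obj_def s4_7 by simp
lemma lpB4_7: "lpB_feasible 4 7 w chi \<Longrightarrow> lpB_obj 4 7 w chi \<le> 1/2"
  unfolding lpB_feasible_def ch9 oB4_7 by (simp only: pe4 simp_thms; elim conjE; linarith)
lemma s4_8: "{4..8::nat} = {4,5,6,7,8}" unfolding set_eq_iff by (simp; presburger)
lemma oB4_8: "lpB_obj 4 8 w chi = (1/4) + (5/18) * chi - (w 4 * (1/20) + w 5 * (1/30) + w 6 * (1/42) + w 7 * (1/56) + w 8 * (1/72))"
  unfolding lpB_obj_def s4_8 by simp
lemma lpB4_8: "lpB_feasible 4 8 w chi \<Longrightarrow> lpB_obj 4 8 w chi \<le> 1/2"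
  unfolding lpB_feasible_def ch9 oB4_8 by (simp only: pe4 simp_thms; elim conjE; linarith)
lemma s4_9: "{4..9::nat} = {4,5,6,7,8,9}" unfolding set_eq_iff by (simp; presburger)
lemma oB4_9: "lpB_obj 4 9 w chi = (1/4) + (23/80) * chi - (w 4 * (1/20) + w 5 * (1/30) + w 6 * (1/42) + w 7 * (1/56) + w 8 * (1/72) + w 9 * (1/90))"
  unfolding lpB_obj_def s4_9 by simp
lemma lpB4_9: "lpB_feasible 4 9 w chi \<Longrightarrow> lpB_obj 4 9 w chi \<le> 1/2"
  unfolding lpB_feasible_def ch9 oB4_9 by (simp only: pe4 simp_thms; elim conjE; linarith)
lemma s4_10: "{4..10::nat} = {4,5,6,7,8,9,10}" unfolding set_eq_iff by (simp; presburger)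
lemma oB4_10: "lpB_obj 4 10 w chi = (1/4) + (13/44) * chi - (w 4 * (1/20) + w 5 * (1/30) + w 6 * (1/42) + w 7 * (1/56) + w 8 * (1/72) + w 9 * (1/90) + w 10 * (1/110))"
  unfolding lpB_obj_def s4_10 by simp
lemma lpB4_10: "lpB_feasible 4 10 w chi \<Longrightarrow> lpB_obj 4 10 w chi \<le> 1/2"
  unfolding lpB_feasible_def ch9 oB4_10 by (simp only: pe4 simp_thms; elim conjE; linarith)
lemma s5_5: "{5..5::nat} = {5}" unfolding set_eq_iff by (simp; presburger)
lemma oB5_5: "lpB_obj 5 5 w chi = (1/5) + (11/48) * chi - (w 5 * (1/30))"
  unfolding lpB_obj_def s5_5 by simp
lemma pe5: "(((5::nat) \<noteq> 1) = True)" "(5::nat) - 1 = 4" by simp_all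
lemma lpB5_5: "lpB_feasible 5 5 w chi \<Longrightarrow> lpB_obj 5 5 w chi \<le> 1/2"
  unfolding lpB_feasible_def ch9 oB5_5 by (simp only: pe5 simp_thms; elim conjE; linarith)
lemma s5_6: "{5..6::nat} = {5,6}" unfolding set_eq_iff by (simp; presburger)
lemma oB5_6: "lpB_obj 5 6 w chi = (1/5) + (1/4) * chi - (w 5 * (1/30) + w 6 * (1/42))"
  unfolding lpB_obj_def s5_6 by simp
lemma lpB5_6: "lpB_feasible 5 6 w chi \<Longrightarrow> lpB_obj 5 6 w chi \<le> 1/2"
  unfolding lpB_feasible_def ch9 oB5_6 by (simp only: pe5 simp_thms; elim conjE; linarith)
lemma s5_7: "{5..7::nat} = {5,6,7}" unfolding set_eq_iff by (simp; presburger)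
lemma oB5_7: "lpB_obj 5 7 w chi = (1/5) + (17/64) * chi - (w 5 * (1/30) + w 6 * (1/42) + w 7 * (1/56))"
  unfolding lpB_obj_def s5_7 by simp
lemma lpB5_7: "lpB_feasible 5 7 w chi \<Longrightarrow> lpB_obj 5 7 w chi \<le> 1/2"
  unfolding lpB_feasible_def ch9 oB5_7 by (simp only: pe5 simp_thms; elim conjE; linarith)
lemma s5_8: "{5..8::nat} = {5,6,7,8}" unfolding set_eq_iff by (simp; presburger)
lemma oB5_8: "lpB_obj 5 8 w chi = (1/5) + (5/18) * chi - (w 5 * (1/30) + w 6 * (1/42) + w 7 * (1/56) + w 8 * (1/72))"
  unfolding lpB_obj_def s5_8 by simp
lemma lpB5_8: "lpB_feasible 5 8 w chi \<Longrightarrow> lpB_obj 5 8 w chi \<le> 1/2"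
  unfolding lpB_feasible_def ch9 oB5_8 by (simp only: pe5 simp_thms; elim conjE; linarith)
lemma s5_9: "{5..9::nat} = {5,6,7,8,9}" unfolding set_eq_iff by (simp; presburger)
lemma oB5_9: "lpB_obj 5 9 w chi = (1/5) + (23/80) * chi - (w 5 * (1/30) + w 6 * (1/42) + w 7 * (1/56) + w 8 * (1/72) + w 9 * (1/90))"
  unfolding lpB_obj_def s5_9 by simp
lemma lpB5_9: "lpB_feasible 5 9 w chi \<Longrightarrow> lpB_obj 5 9 w chi \<le> 1/2"
  unfolding lpB_feasible_def ch9 oB5_9 by (simp only: pe5 simp_thms; elim conjE; linarith)
lemma s5_10: "{5..10::nat} = {5,6,7,8,9,10}" unfolding set_eq_iff by (simp; presburger)
lemma oB5_10: "lpB_obj 5 10 w chi = (1/5) + (13/44) * chi - (w 5 * (1/30) + w 6 * (1/42) + w 7 * (1/56) + w 8 * (1/72) + w 9 * (1/90) + w 10 * (1/110))"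
  unfolding lpB_obj_def s5_10 by simp
lemma lpB5_10: "lpB_feasible 5 10 w chi \<Longrightarrow> lpB_obj 5 10 w chi \<le> 1/2"
  unfolding lpB_feasible_def ch9 oB5_10 by (simp only: pe5 simp_thms; elim conjE; linarith)


lemma node_bound:
  fixes x :: "nat \<Rightarrow> real" and I :: "nat set"
  assumes I: "finite I" and x1: "\<forall>i\<in>I. x i \<le> 1" and T: "(\<Sum>i\<in>I. 1 - x i) \<le> T"
    and r0: "1/2 \<le> r0" "r0 \<le> 7/8"
  shows "\<exists>m::nat. (\<Sum>i\<in>I. max 0 (7/8 - max r0 (x i))) \<le> real m * (7/8 - r0)
              \<and> (\<Sum>i\<in>I. max 0 (7/8 - max r0 (x i))) \<le> T - real m / 8"
proof -
  define P where "P = {i\<in>I. x i < 7/8}"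
  have PI: "P \<subseteq> I" and finP: "finite P" using I unfolding P_def by auto
  have eq: "(\<Sum>i\<in>I. max 0 (7/8 - max r0 (x i))) = (\<Sum>i\<in>P. max 0 (7/8 - max r0 (x i)))"
    by (rule sum.mono_neutral_right[OF I PI]) (auto simp: P_def)
  have b1: "(\<Sum>i\<in>P. max 0 (7/8 - max r0 (x i))) \<le> (\<Sum>i\<in>P. 7/8 - r0)"
    by (rule sum_mono) (use r0 in auto)
  have b2: "(\<Sum>i\<in>P. max 0 (7/8 - max r0 (x i))) \<le> (\<Sum>i\<in>P. (1 - x i) - 1/8)"
    by (rule sum_mono) (auto simp: P_def)
  have b3: "(\<Sum>i\<in>P. 1 - x i) \<le> (\<Sum>i\<in>I. 1 - x i)"
    by (rule sum_mono2[OF I PI]) (use x1 in auto)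
  have "(\<Sum>i\<in>P. (1 - x i) - 1/8) = (\<Sum>i\<in>P. 1 - x i) - real (card P) / 8"
    by (simp add: sum_subtractf)
  then show ?thesis using b1 b2 b3 T eq by (intro exI[of _ "card P"]) auto
qed

lemma line1: "1 / (1 + real (n::nat)) \<ge> 1/2 - real n / 12"
proof (cases "n \<le> 6")
  case True then have "n = 0 \<or> n = 1 \<or> n = 2 \<or> n = 3 \<or> n = 4 \<or> n = 5 \<or> n = 6" by auto
  then show ?thesis by auto
next
  case False then have "real n \<ge> 6" by auto
  then have "1/2 - real n / 12 \<le> 0" by simp
  also have "0 \<le> 1 / (1 + real n)" by simp
  finally show ?thesis .
qed

lemma line2: "1 / (1 + real (n::nat)) \<ge> 2/5 - real n / 20"
proof (cases "n \<le> 8")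
  case True then have "n = 0 \<or> n = 1 \<or> n = 2 \<or> n = 3 \<or> n = 4 \<or> n = 5 \<or> n = 6 \<or> n = 7 \<or> n = 8" by auto
  then show ?thesis by auto
next
  case False then have "real n \<ge> 8" by auto
  then have "2/5 - real n / 20 \<le> 0" by simp
  also have "0 \<le> 1 / (1 + real n)" by simp
  finally show ?thesis .
qed


lemma perm_last_card:
  fixes K U :: "nat set" and c :: nat
  assumes K: "finite K" and UK: "U \<subseteq> K" and cU: "c \<in> U"
  shows "card {p. p permutes K \<and> (\<forall>i\<in>U. inv p i \<le> inv p c)} * card U = card {p. p permutes K}"
proof -
  define Q where "Q j = {p. p permutes K \<and> (\<forall>i\<in>U. inv p i \<le> inv p j)}" for j
  have finU: "finite U" using K UK finite_subset by blast
  have finQ: "finite (Q j)" for j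
    using finite_permutations[OF K] unfolding Q_def by (rule finite_subset[rotated]) auto
  have cover: "{p. p permutes K} = (\<Union>j\<in>U. Q j)"
  proof
    show "(\<Union>j\<in>U. Q j) \<subseteq> {p. p permutes K}" unfolding Q_def by auto
    show "{p. p permutes K} \<subseteq> (\<Union>j\<in>U. Q j)"
    proof
      fix p assume p: "p \<in> {p. p permutes K}"
      have ne: "inv p ` U \<noteq> {}" using cU by auto
      have "Max (inv p ` U) \<in> inv p ` U" using Max_in[OF finite_imageI[OF finU] ne] .
      then obtain j where j: "j \<in> U" "Max (inv p ` U) = inv p j" by auto
      have "\<forall>i\<in>U. inv p i \<le> inv p j" using j finU by (metis Max_ge finite_imageI imageI)
      then show "p \<in> (\<Union>j\<in>U. Q j)" using p j unfolding Q_def by auto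
    qed
  qed
  have disj: "\<forall>i\<in>U. \<forall>j\<in>U. i \<noteq> j \<longrightarrow> Q i \<inter> Q j = {}"
  proof (intro ballI impI)
    fix i j assume ij: "i \<in> U" "j \<in> U" "i \<noteq> j"
    show "Q i \<inter> Q j = {}"
    proof (rule ccontr)
      assume "Q i \<inter> Q j \<noteq> {}"
      then obtain p where p: "p permutes K" "\<forall>l\<in>U. inv p l \<le> inv p i" "\<forall>l\<in>U. inv p l \<le> inv p j"
        unfolding Q_def by auto
      have "inv p i = inv p j" using p ij by (meson le_antisym)
      then have "i = j" using permutes_inj[OF permutes_inv[OF p(1)]] by (meson injD)
      then show False using ij by simp
    qed
  qed
  have same: "card (Q j) = card (Q c)" if jU: "j \<in> U" for j
  proof -
    define \<tau> where "\<tau> = Transposition.transpose j c"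
    have \<tau>K: "\<tau> permutes K" unfolding \<tau>_def using jU cU UK by (intro permutes_swap_id) auto
    have invcomp: "inv (\<tau> \<circ> p) = inv p \<circ> \<tau>" if "p permutes K" for p
      using o_inv_distrib[OF permutes_bij[OF \<tau>K] permutes_bij[OF that]] unfolding \<tau>_def by simp
    have \<tau>U: "\<tau> l \<in> U" if "l \<in> U" for l
      using that jU cU unfolding \<tau>_def by (cases "l = j"; cases "l = c") auto
    have map: "\<tau> \<circ> p \<in> Q j" if "p \<in> Q c" for p
    proof -
      have p: "p permutes K" "\<forall>l\<in>U. inv p l \<le> inv p c" using that unfolding Q_def by auto
      have "\<forall>l\<in>U. inv (\<tau> \<circ> p) l \<le> inv (\<tau> \<circ> p) j"
        using p \<tau>U unfolding invcomp[OF p(1)] by (simp add: \<tau>_def)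
      then show ?thesis using permutes_compose[OF p(1) \<tau>K] unfolding Q_def by auto
    qed
    have map2: "\<tau> \<circ> p \<in> Q c" if "p \<in> Q j" for p
    proof -
      have p: "p permutes K" "\<forall>l\<in>U. inv p l \<le> inv p j" using that unfolding Q_def by auto
      have "\<forall>l\<in>U. inv (\<tau> \<circ> p) l \<le> inv (\<tau> \<circ> p) c"
        using p \<tau>U unfolding invcomp[OF p(1)] by (simp add: \<tau>_def)
      then show ?thesis using permutes_compose[OF p(1) \<tau>K] unfolding Q_def by auto
    qed
    have invol: "\<tau> \<circ> (\<tau> \<circ> p) = p" for p :: "nat \<Rightarrow> nat"
      unfolding \<tau>_def by (simp add: comp_assoc[symmetric])
    have "bij_betw (\<lambda>p. \<tau> \<circ> p) (Q c) (Q j)"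
      by (rule bij_betw_byWitness[where f'="\<lambda>p. \<tau> \<circ> p"]) (auto simp: invol map map2)
    then show ?thesis by (simp add: bij_betw_same_card)
  qed
  have "card {p. p permutes K} = (\<Sum>j\<in>U. card (Q j))"
    unfolding cover by (rule card_UN_disjoint[OF finU]) (auto simp: finQ disj)
  also have "\<dots> = (\<Sum>j\<in>U. card (Q c))" using same by (rule sum.cong[OF refl])
  also have "\<dots> = card (Q c) * card U" by simp
  finally show ?thesis unfolding Q_def by simp
qed


lemma card_filter_sum: "finite A \<Longrightarrow> real (card {x\<in>A. P x}) = (\<Sum>x\<in>A. if P x then 1 else 0)"
  by (simp add: sum.inter_filter[symmetric])

lemma muI:
  fixes a :: real
  shows "measure (uniform_measure lborel {1/2<..<7/8::real}) {a<..} = 8/3 * max 0 (7/8 - max a (1/2))"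
proof -
  have "measure (uniform_measure lborel {1/2<..<7/8::real}) {a<..}
      = measure lborel ({1/2<..<7/8} \<inter> {a<..}) / measure lborel {1/2<..<7/8::real}"
    by (subst measure_uniform_measure) auto
  also have "{1/2<..<7/8} \<inter> {a<..} = {max a (1/2)<..<7/8::real}" by auto
  also have "measure lborel {max a (1/2)<..<7/8::real} = max 0 (7/8 - max a (1/2))"
    by (cases "max a (1/2) \<le> 7/8") auto
  finally show ?thesis by simp
qed

lemma R_meas:
  fixes xu xv :: "nat \<Rightarrow> real" and K :: "nat set" and Q :: "nat \<Rightarrow> bool"
  assumes "finite K"
  shows "{rho. t < rho \<and> (\<forall>i\<in>K. (xu i < rho \<or> xv i < rho) \<longrightarrow> Q i)} \<in> sets borel"
proof -
  have "Measurable.pred borel (\<lambda>rho::real. t < rho \<and> (\<forall>i\<in>K. (xu i < rho \<or> xv i < rho) \<longrightarrow> Q i))"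
    using assms by measurable
  then show ?thesis by (simp add: pred_def)
qed

lemma part3:
  fixes V :: "'v set" and E :: "'v set set" and k :: nat and ell xv xe e dflt
  assumes G: "edge_colored_graph V E k ell" and F: "minecc_lp_feasible V E k ell xv xe" and eE: "e \<in> E"
    and xmax: "xe e = Max ((\<lambda>w. xv w (ell e)) ` e)" and t1: "1/8 < xe e" and t2: "xe e < 3/4"
  shows "gcr_mistake_prob (1/2) (7/8) k xv dflt ell e \<le> 4/3 * xe e"
proof -
  define t where "t = xe e"
  define c where "c = ell e"
  have eV: "e \<subseteq> V" and ce: "card e = 2" and cK: "c \<in> {1..k}" and finV: "finite V"
    using G eE unfolding edge_colored_graph_def c_def by auto
  obtain u v where e: "e = {u,v}" and uv: "u \<noteq> v" using ce by (meson card_2_iff)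
  have uV: "u \<in> V" and vV: "v \<in> V" using eV e by auto
  have fine: "finite e" using e by simp
  have xc: "xv w c \<le> t" if "w \<in> e" for w
    unfolding t_def xmax c_def by (rule Max_ge) (use fine that in auto)
  have xuc: "xv u c \<le> t" and xvc: "xv v c \<le> t" using xc e by auto
  have x01: "0 \<le> xv w i \<and> xv w i \<le> 1" if "w \<in> V" "i \<in> {1..k}" for w i
    using F that unfolding minecc_lp_feasible_def by auto
  have xsum: "(\<Sum>i=1..k. xv w i) = real k - 1" if "w \<in> V" for w
    using F that unfolding minecc_lp_feasible_def by auto
  define C' where "C' = {1..k} - {c}"
  have finC': "finite C'" unfolding C'_def by simp
  have cardC': "real (card C') = real k - 1" unfolding C'_def using cK by (simp add: of_nat_diff)
  have defsum: "(\<Sum>i\<in>C'. 1 - xv w i) = xv w c" if "w \<in> V" for w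
  proof -
    have "(\<Sum>i=1..k. xv w i) = xv w c + (\<Sum>i\<in>C'. xv w i)"
      unfolding C'_def using cK by (simp add: sum.remove)
    then have "(\<Sum>i\<in>C'. xv w i) = real k - 1 - xv w c" using xsum[OF that] by simp
    then show ?thesis using cardC' by (simp add: sum_subtractf)
  qed
  have defle: "1 - xv w i \<le> xv w c" if "w \<in> V" "i \<in> C'" for w i
  proof -
    have "1 - xv w i = (\<Sum>j\<in>{i}. 1 - xv w j)" by simp
    also have "\<dots> \<le> (\<Sum>j\<in>C'. 1 - xv w j)"
      by (rule sum_mono2[OF finC']) (use that x01 in \<open>auto simp: C'_def\<close>)
    finally show ?thesis using defsum[OF that(1)] by simp
  qed

  define Perms where "Perms = {p. p permutes {1..k::nat}}"
  have finP: "finite Perms" unfolding Perms_def by (simp add: finite_permutations)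
  have idP: "id \<in> Perms" unfolding Perms_def by (simp add: permutes_id)
  have cardP: "card Perms = fact k" unfolding Perms_def by (rule card_permutations) auto
  define S where "S = {1/2<..<7/8::real}"
  define Mu where "Mu = uniform_measure lborel S"
  define N where "N = uniform_count_measure Perms"
  have sp: "gcr_space (1/2) (7/8) k = Mu \<Otimes>\<^sub>M N"
    unfolding gcr_space_def Mu_def N_def S_def Perms_def by simp
  have pMu: "prob_space Mu" unfolding Mu_def S_def
    by (rule prob_space_uniform_measure) auto
  have pN: "prob_space N" unfolding N_def using finP idP
    by (intro prob_space_uniform_count_measure) auto
  interpret Mu: prob_space Mu by (rule pMu)
  interpret N: prob_space N by (rule pN)
  interpret MN: prob_space "Mu \<Otimes>\<^sub>M N" by (rule prob_space_pair[OF pMu pN])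
  have spaceMN: "space (Mu \<Otimes>\<^sub>M N) = UNIV \<times> Perms"
    by (simp add: space_pair_measure Mu_def N_def space_uniform_count_measure)
  define good where "good rho p \<longleftrightarrow> t < rho \<and> (\<forall>i\<in>{1..k}. (xv u i < rho \<or> xv v i < rho) \<longrightarrow> inv p i \<le> inv p c)" for rho and p :: "nat \<Rightarrow> nat"
  define Gs where "Gs = {(rho, p). p \<in> Perms \<and> good rho p}"
  have Gs_meas: "Gs \<in> sets (Mu \<Otimes>\<^sub>M N)"
  proof -
    have "Gs = (\<Union>p\<in>Perms. {rho. good rho p} \<times> {p})" unfolding Gs_def by auto
    also have "\<dots> \<in> sets (Mu \<Otimes>\<^sub>M N)"
    proof (rule sets.finite_UN[OF finP])
      fix p assume "p \<in> Perms"
      have "{rho. good rho p} \<in> sets borel" unfolding good_def by (rule R_meas) simp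
      then have "{rho. good rho p} \<in> sets Mu" by (simp add: Mu_def)
      moreover have "{p} \<in> sets N" using \<open>p \<in> Perms\<close> by (simp add: N_def sets_uniform_count_measure)
      ultimately show "{rho. good rho p} \<times> {p} \<in> sets (Mu \<Otimes>\<^sub>M N)" by (rule pair_measureI)
    qed
    finally show ?thesis .
  qed
  have nomistake: "\<not> mistake (gcr_color k xv dflt rho p) ell e" if "(rho, p) \<in> Gs" for rho p
  proof -
    have p: "p permutes {1..k}" and g: "good rho p" using that unfolding Gs_def Perms_def by auto
    have col: "gcr_color k xv dflt rho p w = c" if w: "w = u \<or> w = v" for w
    proof -
      have tr: "t < rho" using g unfolding good_def by simp
      have wc: "xv w c < rho" using w xuc xvc tr by auto
      have j0: "inv p c \<in> {1..k}" using permutes_in_image[OF permutes_inv[OF p]] cK by simp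
      have pj0: "p (inv p c) = c" using permutes_inverses(1)[OF p] .
      have ex: "\<exists>i\<in>{1..k}. xv w i < rho" using wc cK by blast
      have "(GREATEST j. j \<in> {1..k} \<and> xv w (p j) < rho) = inv p c"
      proof (rule Greatest_equality)
        show "inv p c \<in> {1..k} \<and> xv w (p (inv p c)) < rho" using j0 pj0 wc by simp
      next
        fix y assume y: "y \<in> {1..k} \<and> xv w (p y) < rho"
        have py: "p y \<in> {1..k}" using permutes_in_image[OF p] y by simp
        have "inv p (p y) \<le> inv p c" using g py y w unfolding good_def by auto
        then show "y \<le> inv p c" using permutes_inverses(2)[OF p] by simp
      qed
      then show ?thesis unfolding gcr_color_def using ex pj0 by simp
    qed
    have ec: "ell e = c" by (simp add: c_def)
    show ?thesis unfolding mistake_def ec using col e by auto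
  qed
  have sub: "{(rho, prm) \<in> space (Mu \<Otimes>\<^sub>M N). mistake (gcr_color k xv dflt rho prm) ell e}
      \<subseteq> space (Mu \<Otimes>\<^sub>M N) - Gs"
    using nomistake by auto
  have mGs: "measure (Mu \<Otimes>\<^sub>M N) Gs \<ge> 1 - 4/3 * t"
  proof -
    define U where "U rho = {i\<in>{1..k}. xv u i < rho \<or> xv v i < rho}" for rho
    define h where "h rho = (if t < rho then 1 / real (card (U rho)) else 0)" for rho
    have UK: "U rho \<subseteq> {1..k}" for rho unfolding U_def by auto
    have cU: "c \<in> U rho" if "t < rho" for rho using that xuc cK unfolding U_def by auto
    have cardU: "card (U rho) \<ge> 1" if "t < rho" for rho
      using cU[OF that] UK[of rho] by (metis One_nat_def Suc_leI card_gt_0_iff empty_iff finite_atLeastAtMost finite_subset)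
    have slice: "emeasure N (Pair rho -` Gs) = ennreal (h rho)" for rho
    proof (cases "t < rho")
      case True
      have eqs: "Pair rho -` Gs = {p. p permutes {1..k} \<and> (\<forall>i\<in>U rho. inv p i \<le> inv p c)}"
        unfolding Gs_def good_def U_def Perms_def using True by auto
      have cnt: "card {p. p permutes {1..k} \<and> (\<forall>i\<in>U rho. inv p i \<le> inv p c)} * card (U rho) = fact k"
        using perm_last_card[of "{1..k}" "U rho" c] UK cU[OF True] cardP unfolding Perms_def by simp
      have "emeasure N (Pair rho -` Gs) = ennreal (measure N (Pair rho -` Gs))"
        by (rule N.emeasure_eq_measure)
      also have "measure N (Pair rho -` Gs) = real (card (Pair rho -` Gs)) / real (card Perms)"
        unfolding N_def by (rule measure_uniform_count_measure[OF finP]) (auto simp: eqs Perms_def)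
      also have "\<dots> = h rho"
      proof -
        have "real (card (Pair rho -` Gs)) * real (card (U rho)) = real (fact k)"
          unfolding eqs of_nat_mult[symmetric] by (rule arg_cong[OF cnt])
        moreover have "real (card (U rho)) > 0" using cardU[OF True] by simp
        ultimately show ?thesis unfolding h_def cardP using True by (simp add: field_simps)
      qed
      finally show ?thesis .
    next
      case False
      then have "Pair rho -` Gs = {}" unfolding Gs_def good_def by auto
      then show ?thesis using False unfolding h_def by simp
    qed
    have hform: "h = (\<lambda>rho. if t < rho then 1 / (\<Sum>i\<in>{1..k}. if xv u i < rho \<or> xv v i < rho then 1 else 0) else 0)"
    proof -
      have cf: "real (card (U rho)) = (\<Sum>i\<in>{1..k}. if xv u i < rho \<or> xv v i < rho then 1 else 0)" for rho
        unfolding U_def by (rule card_filter_sum) simp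
      show ?thesis unfolding h_def cf ..
    qed
    have hmeas: "h \<in> borel_measurable Mu" unfolding hform Mu_def by measurable
    have hint: "integrable Mu h"
    proof (rule Mu.integrable_const_bound[where B=1])
      show "AE x in Mu. norm (h x) \<le> 1"
      proof (rule AE_I2)
        fix x show "norm (h x) \<le> 1" using cardU[of x] unfolding h_def by auto
      qed
    qed (rule hmeas)
    have hnn: "0 \<le> h rho" for rho unfolding h_def by auto
    have "emeasure (Mu \<Otimes>\<^sub>M N) Gs = (\<integral>\<^sup>+rho. emeasure N (Pair rho -` Gs) \<partial>Mu)"
      by (rule N.emeasure_pair_measure_alt[OF Gs_meas])
    also have "\<dots> = (\<integral>\<^sup>+rho. ennreal (h rho) \<partial>Mu)" by (simp add: slice)
    also have "\<dots> = ennreal (integral\<^sup>L Mu h)" by (rule nn_integral_eq_integral[OF hint]) (simp add: hnn)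
    finally have mG: "measure (Mu \<Otimes>\<^sub>M N) Gs = integral\<^sup>L Mu h"
      by (simp add: MN.emeasure_eq_measure integral_nonneg hnn)
    define r0 where "r0 = max t (1/2)"
    have r0a: "1/2 \<le> r0" "r0 \<le> 7/8" using t2 unfolding r0_def t_def by auto
    define J where "J w = (\<Sum>i\<in>C'. max 0 (7/8 - max r0 (xv w i)))" for w
    have Jb: "J w \<le> max (7/8 - r0) (t - 1/4) \<and> J w \<le> max 0 (t - 1/8)" if wV: "w \<in> V" and wc: "xv w c \<le> t" for w
    proof -
      have x1: "\<forall>i\<in>C'. xv w i \<le> 1" using x01[OF wV] unfolding C'_def by auto
      obtain m :: nat where m: "J w \<le> real m * (7/8 - r0)" "J w \<le> xv w c - real m / 8"
        using node_bound[OF finC' x1 _ r0a, of "xv w c"] defsum[OF wV] unfolding J_def by auto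
      show ?thesis
      proof (cases "m = 0 \<or> m = 1")
        case True then show ?thesis using m wc r0a by auto
      next
        case False then have "real m \<ge> 2" by auto
        then show ?thesis using m wc by auto
      qed
    qed
    have Ju: "J u \<le> max (7/8 - r0) (t - 1/4) \<and> J u \<le> max 0 (t - 1/8)" by (rule Jb[OF uV xuc])
    have Jv: "J v \<le> max (7/8 - r0) (t - 1/4) \<and> J v \<le> max 0 (t - 1/8)" by (rule Jb[OF vV xvc])
    define nt where "nt rho = (\<Sum>i\<in>C'. indicator {max t (xv u i)<..} rho + indicator {max t (xv v i)<..} rho :: real)" for rho :: real
    define phi where "phi A B \<delta> rho = A * indicator {t<..} rho - B * indicator {1-t<..} rho - \<delta> * nt rho" for A B \<delta> :: real and rho :: real
    have spMu: "space Mu = UNIV" by (simp add: Mu_def)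
    have intind: "integrable Mu (indicator {a<..} :: real \<Rightarrow> real)" for a :: real
    proof (rule integrable_real_indicator)
      show "{a<..} \<in> sets Mu" by (simp add: Mu_def)
      show "emeasure Mu {a<..} < \<infinity>" using Mu.emeasure_finite[of "{a<..}"] by (simp add: less_top[symmetric])
    qed
    have muI': "integral\<^sup>L Mu (indicator {a<..} :: real \<Rightarrow> real) = 8/3 * max 0 (7/8 - max a (1/2))" for a :: real
      using muI[of a] by (simp add: Mu_def S_def)
    have intnt: "integrable Mu nt" unfolding nt_def
      by (rule Bochner_Integration.integrable_sum[where f="\<lambda>i rho. indicator {max t (xv u i)<..} rho + indicator {max t (xv v i)<..} rho"],
          rule Bochner_Integration.integrable_add, rule intind, rule intind)
    have intphi: "integrable Mu (phi A B \<delta>)" for A B \<delta>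
      unfolding phi_def by (intro Bochner_Integration.integrable_diff integrable_mult_right intind intnt)
    have valnt: "integral\<^sup>L Mu nt = 8/3 * (J u + J v)"
    proof -
      have mm: "max (max t x) (1/2) = max r0 x" for x :: real unfolding r0_def by (auto simp: max_def)
      have "integral\<^sup>L Mu nt = (\<Sum>i\<in>C'. integral\<^sup>L Mu (indicator {max t (xv u i)<..}) + integral\<^sup>L Mu (indicator {max t (xv v i)<..}))"
        unfolding nt_def by (subst Bochner_Integration.integral_sum) (auto intro!: Bochner_Integration.integrable_add intind simp: Bochner_Integration.integral_add[OF intind intind])
      also have "\<dots> = (\<Sum>i\<in>C'. 8/3 * max 0 (7/8 - max r0 (xv u i)) + 8/3 * max 0 (7/8 - max r0 (xv v i)))"
        by (simp only: muI' mm)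
      also have "\<dots> = 8/3 * (J u + J v)" by (simp only: J_def sum.distrib distrib_left sum_distrib_left)
      finally show ?thesis .
    qed
    have valphi: "integral\<^sup>L Mu (phi A B \<delta>) = A * (8/3 * max 0 (7/8 - r0)) - B * (8/3 * max 0 (7/8 - max (1-t) (1/2))) - \<delta> * (8/3 * (J u + J v))" for A B \<delta>
    proof -
      have "integral\<^sup>L Mu (phi A B \<delta>) = A * integral\<^sup>L Mu (indicator {t<..}) - B * integral\<^sup>L Mu (indicator {1-t<..}) - \<delta> * integral\<^sup>L Mu nt"
        unfolding phi_def
        by (subst Bochner_Integration.integral_diff, (intro Bochner_Integration.integrable_diff integrable_mult_right intind intnt)+)
           (subst Bochner_Integration.integral_diff, (intro integrable_mult_right intind)+, simp)
      then show ?thesis unfolding valnt muI' r0_def by simp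
    qed
    have pw: "phi A B \<delta> rho \<le> h rho"
      if B0: "0 \<le> B" and d0: "0 \<le> \<delta>"
        and hyp: "\<And>n::nat. t < rho \<Longrightarrow> (1 \<le> n \<longrightarrow> 1 - t < rho) \<Longrightarrow> A - B * indicator {1-t<..} rho - \<delta> * real n \<le> 1 / (1 + real n)"
      for A B \<delta> rho
    proof (cases "t < rho")
      case False
      then have "nt rho = 0" unfolding nt_def by (auto simp: indicator_def)
      then show ?thesis using False B0 unfolding phi_def h_def by (auto simp: indicator_def)
    next
      case True
      define Au where "Au = {i\<in>C'. xv u i < rho}"
      define Av where "Av = {i\<in>C'. xv v i < rho}"
      have ind: "indicator {max t (xv w i)<..} rho = (if xv w i < rho then 1 else (0::real))" for w i
        using True by (auto simp: indicator_def)
      have ntv: "nt rho = real (card Au + card Av)"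
        unfolding nt_def ind Au_def Av_def
        by (simp add: sum.distrib card_filter_sum[OF finC'])
      have finAu: "finite Au" "finite Av" unfolding Au_def Av_def using finC' by auto
      have "U rho \<subseteq> insert c (Au \<union> Av)" unfolding U_def Au_def Av_def C'_def by auto
      then have "card (U rho) \<le> card (insert c (Au \<union> Av))" by (intro card_mono) (use finAu in auto)
      also have "\<dots> \<le> Suc (card (Au \<union> Av))" by (rule card_insert_le_m1) (auto simp: card_insert_if finAu)
      also have "card (Au \<union> Av) \<le> card Au + card Av" by (rule card_Un_le)
      finally have cle: "real (card (U rho)) \<le> 1 + real (card Au + card Av)" by simp
      have cpos: "real (card (U rho)) > 0" using cardU[OF True] by simp
      have hge: "1 / (1 + real (card Au + card Av)) \<le> h rho"
        unfolding h_def using True cle cpos by (simp add: frac_le)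
      have step: "1 \<le> card Au + card Av \<longrightarrow> 1 - t < rho"
      proof
        assume "1 \<le> card Au + card Av"
        then have "Au \<noteq> {} \<or> Av \<noteq> {}" by auto
        then obtain w i where wi: "w \<in> V" "i \<in> C'" "xv w i < rho" and wuv: "w = u \<or> w = v"
          unfolding Au_def Av_def using uV vV by blast
        have "1 - xv w i \<le> xv w c" by (rule defle[OF wi(1,2)])
        moreover have "xv w c \<le> t"
          using wuv xuc xvc by auto
        ultimately show "1 - t < rho" using wi by linarith
      qed
      have "phi A B \<delta> rho = A - B * indicator {1-t<..} rho - \<delta> * real (card Au + card Av)"
        unfolding phi_def ntv using True by (simp add: indicator_def)
      also have "\<dots> \<le> 1 / (1 + real (card Au + card Av))" by (rule hyp[OF True step])
      also have "\<dots> \<le> h rho" by (rule hge)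
      finally show ?thesis .
    qed
    have mono: "integral\<^sup>L Mu (phi A B \<delta>) \<le> measure (Mu \<Otimes>\<^sub>M N) Gs"
      if B0: "0 \<le> B" and d0: "0 \<le> \<delta>"
        and hyp: "\<And>n::nat. \<And>rho. t < rho \<Longrightarrow> (1 \<le> n \<longrightarrow> 1 - t < rho) \<Longrightarrow> A - B * indicator {1-t<..} rho - \<delta> * real n \<le> 1 / (1 + real n)"
      for A B \<delta>
      unfolding mG by (rule integral_mono[OF intphi hint]) (rule pw[OF B0 d0 hyp], assumption+)
    consider (c1) "t \<le> 1/2" | (c2) "1/2 < t" "t \<le> 5/8" | (c3) "5/8 < t" by linarith
    then show ?thesis
    proof cases
      case c1
      have r: "r0 = 1/2" using c1 unfolding r0_def by simp
      have m2: "max (1 - t) (1/2) = 1 - t" using c1 by simp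
      have hyp: "1 - 1/2 * indicator {1-t<..} rho - 1/12 * real n \<le> 1 / (1 + real n)"
        if "t < rho" "1 \<le> n \<longrightarrow> 1 - t < rho" for n :: nat and rho :: real
      proof (cases "n = 0")
        case True then show ?thesis by (simp add: indicator_def)
      next
        case False then have "indicator {1-t<..} rho = (1::real)" using that by (simp add: indicator_def)
        then show ?thesis using line1[of n] by simp
      qed
      have "integral\<^sup>L Mu (phi 1 (1/2) (1/12)) \<le> measure (Mu \<Otimes>\<^sub>M N) Gs"
        by (rule mono) (use hyp in auto)
      moreover have "integral\<^sup>L Mu (phi 1 (1/2) (1/12)) = 1 - 4/3 * (t - 1/8) - 2/9 * (J u + J v)"
        unfolding valphi r m2 using t1 unfolding t_def by (simp add: field_simps)
      moreover have "J u \<le> t - 1/8" "J v \<le> t - 1/8" using Ju Jv t1 unfolding t_def by auto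
      ultimately have A: "integral\<^sup>L Mu (phi 1 (1/2) (1/12)) \<le> measure (Mu \<Otimes>\<^sub>M N) Gs"
        and B: "integral\<^sup>L Mu (phi 1 (1/2) (1/12)) = 1 - 4/3 * (t - 1/8) - 2/9 * (J u + J v)"
        and C: "J u \<le> t - 1/8" "J v \<le> t - 1/8" by auto
      have D: "1 - 4/3 * t \<le> 1 - 4/3 * (t - 1/8) - 2/9 * (J u + J v)" using C c1 by argo
      show ?thesis using A B D by linarith
    next
      case c2
      have r: "r0 = t" using c2 unfolding r0_def by simp
      have "integral\<^sup>L Mu (phi (1/2) 0 (1/12)) \<le> measure (Mu \<Otimes>\<^sub>M N) Gs"
        by (rule mono) (use line1 in auto)
      moreover have "integral\<^sup>L Mu (phi (1/2) 0 (1/12)) = 4/3 * (7/8 - t) - 2/9 * (J u + J v)"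
        unfolding valphi r using c2 by (simp add: field_simps)
      moreover have "J u \<le> 3/8" "J v \<le> 3/8" using Ju Jv c2 r by auto
      ultimately show ?thesis by argo
    next
      case c3
      have r: "r0 = t" using c3 unfolding r0_def by simp
      have "integral\<^sup>L Mu (phi (2/5) 0 (1/20)) \<le> measure (Mu \<Otimes>\<^sub>M N) Gs"
        by (rule mono) (use line2 in auto)
      moreover have "integral\<^sup>L Mu (phi (2/5) 0 (1/20)) = 16/15 * (7/8 - t) - 2/15 * (J u + J v)"
        unfolding valphi r using c3 t2 unfolding t_def by (simp add: field_simps)
      moreover have "J u \<le> t - 1/4" "J v \<le> t - 1/4" using Ju Jv c3 r by auto
      ultimately show ?thesis by argo
    qed
  qed
  have "gcr_mistake_prob (1/2) (7/8) k xv dflt ell e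
      = measure (Mu \<Otimes>\<^sub>M N) {(rho, prm) \<in> space (Mu \<Otimes>\<^sub>M N). mistake (gcr_color k xv dflt rho prm) ell e}"
    unfolding gcr_mistake_prob_def sp ..
  also have "\<dots> \<le> measure (Mu \<Otimes>\<^sub>M N) (space (Mu \<Otimes>\<^sub>M N) - Gs)"
    by (rule MN.finite_measure_mono[OF sub]) (use Gs_meas in auto)
  also have "\<dots> = 1 - measure (Mu \<Otimes>\<^sub>M N) Gs" by (rule MN.prob_compl[OF Gs_meas])
  finally show ?thesis using mGs unfolding t_def by simp
qed


lemma partA: "\<forall>q\<in>{1..6::nat}. \<forall>w chi. lpA_feasible q w chi \<longrightarrow> lpA_obj q w chi \<le> 1/2"
  unfolding sA6 using lpA1 lpA2 lpA3 lpA4 lpA5 lpA6 by blast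

lemma partB: "\<forall>p q::nat. 1 \<le> p \<and> p \<le> 5 \<and> p \<le> q \<and> q \<le> 10 \<longrightarrow>
        (\<forall>w chi. lpB_feasible p q w chi \<longrightarrow> lpB_obj p q w chi \<le> 1/2)"
proof (intro allI impI)
  fix p q :: nat and w chi
  assume h: "1 \<le> p \<and> p \<le> 5 \<and> p \<le> q \<and> q \<le> 10" and f: "lpB_feasible p q w chi"
  consider "p = 1" | "p = 2" | "p = 3" | "p = 4" | "p = 5" using h by linarith
  then show "lpB_obj p q w chi \<le> 1/2"
  proof cases
    case 1
    then have hp: "p = 1" .
    consider "q = 1" | "q = 2" | "q = 3" | "q = 4" | "q = 5" | "q = 6" | "q = 7" | "q = 8" | "q = 9" | "q = 10" using h hp by (atomize_elim, presburger)
    then show ?thesis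
    proof cases
      case 1
      show ?thesis using f unfolding hp \<open>q = 1\<close> by (rule lpB1_1)
    next
      case 2
      show ?thesis using f unfolding hp \<open>q = 2\<close> by (rule lpB1_2)
    next
      case 3
      show ?thesis using f unfolding hp \<open>q = 3\<close> by (rule lpB1_3)
    next
      case 4
      show ?thesis using f unfolding hp \<open>q = 4\<close> by (rule lpB1_4)
    next
      case 5
      show ?thesis using f unfolding hp \<open>q = 5\<close> by (rule lpB1_5)
    next
      case 6
      show ?thesis using f unfolding hp \<open>q = 6\<close> by (rule lpB1_6)
    next
      case 7
      show ?thesis using f unfolding hp \<open>q = 7\<close> by (rule lpB1_7)
    next
      case 8
      show ?thesis using f unfolding hp \<open>q = 8\<close> by (rule lpB1_8)
    next
      case 9
      show ?thesis using f unfolding hp \<open>q = 9\<close> by (rule lpB1_9)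
    next
      case 10
      show ?thesis using f unfolding hp \<open>q = 10\<close> by (rule lpB1_10)
    qed
  next
    case 2
    then have hp: "p = 2" .
    consider "q = 2" | "q = 3" | "q = 4" | "q = 5" | "q = 6" | "q = 7" | "q = 8" | "q = 9" | "q = 10" using h hp by (atomize_elim, presburger)
    then show ?thesis
    proof cases
      case 1
      show ?thesis using f unfolding hp \<open>q = 2\<close> by (rule lpB2_2)
    next
      case 2
      show ?thesis using f unfolding hp \<open>q = 3\<close> by (rule lpB2_3)
    next
      case 3
      show ?thesis using f unfolding hp \<open>q = 4\<close> by (rule lpB2_4)
    next
      case 4
      show ?thesis using f unfolding hp \<open>q = 5\<close> by (rule lpB2_5)
    next
      case 5
      show ?thesis using f unfolding hp \<open>q = 6\<close> by (rule lpB2_6)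
    next
      case 6
      show ?thesis using f unfolding hp \<open>q = 7\<close> by (rule lpB2_7)
    next
      case 7
      show ?thesis using f unfolding hp \<open>q = 8\<close> by (rule lpB2_8)
    next
      case 8
      show ?thesis using f unfolding hp \<open>q = 9\<close> by (rule lpB2_9)
    next
      case 9
      show ?thesis using f unfolding hp \<open>q = 10\<close> by (rule lpB2_10)
    qed
  next
    case 3
    then have hp: "p = 3" .
    consider "q = 3" | "q = 4" | "q = 5" | "q = 6" | "q = 7" | "q = 8" | "q = 9" | "q = 10" using h hp by (atomize_elim, presburger)
    then show ?thesis
    proof cases
      case 1
      show ?thesis using f unfolding hp \<open>q = 3\<close> by (rule lpB3_3)
    next
      case 2
      show ?thesis using f unfolding hp \<open>q = 4\<close> by (rule lpB3_4)
    next
      case 3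
      show ?thesis using f unfolding hp \<open>q = 5\<close> by (rule lpB3_5)
    next
      case 4
      show ?thesis using f unfolding hp \<open>q = 6\<close> by (rule lpB3_6)
    next
      case 5
      show ?thesis using f unfolding hp \<open>q = 7\<close> by (rule lpB3_7)
    next
      case 6
      show ?thesis using f unfolding hp \<open>q = 8\<close> by (rule lpB3_8)
    next
      case 7
      show ?thesis using f unfolding hp \<open>q = 9\<close> by (rule lpB3_9)
    next
      case 8
      show ?thesis using f unfolding hp \<open>q = 10\<close> by (rule lpB3_10)
    qed
  next
    case 4
    then have hp: "p = 4" .
    consider "q = 4" | "q = 5" | "q = 6" | "q = 7" | "q = 8" | "q = 9" | "q = 10" using h hp by (atomize_elim, presburger)
    then show ?thesis
    proof cases
      case 1
      show ?thesis using f unfolding hp \<open>q = 4\<close> by (rule lpB4_4)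
    next
      case 2
      show ?thesis using f unfolding hp \<open>q = 5\<close> by (rule lpB4_5)
    next
      case 3
      show ?thesis using f unfolding hp \<open>q = 6\<close> by (rule lpB4_6)
    next
      case 4
      show ?thesis using f unfolding hp \<open>q = 7\<close> by (rule lpB4_7)
    next
      case 5
      show ?thesis using f unfolding hp \<open>q = 8\<close> by (rule lpB4_8)
    next
      case 6
      show ?thesis using f unfolding hp \<open>q = 9\<close> by (rule lpB4_9)
    next
      case 7
      show ?thesis using f unfolding hp \<open>q = 10\<close> by (rule lpB4_10)
    qed
  next
    case 5
    then have hp: "p = 5" .
    consider "q = 5" | "q = 6" | "q = 7" | "q = 8" | "q = 9" | "q = 10" using h hp by (atomize_elim, presburger)
    then show ?thesis
    proof cases
      case 1
      show ?thesis using f unfolding hp \<open>q = 5\<close> by (rule lpB5_5)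
    next
      case 2
      show ?thesis using f unfolding hp \<open>q = 6\<close> by (rule lpB5_6)
    next
      case 3
      show ?thesis using f unfolding hp \<open>q = 7\<close> by (rule lpB5_7)
    next
      case 4
      show ?thesis using f unfolding hp \<open>q = 8\<close> by (rule lpB5_8)
    next
      case 5
      show ?thesis using f unfolding hp \<open>q = 9\<close> by (rule lpB5_9)
    next
      case 6
      show ?thesis using f unfolding hp \<open>q = 10\<close> by (rule lpB5_10)
    qed
  qed
qed

theorem lemma6:
  shows "(\<forall>q\<in>{1..6::nat}. \<forall>w chi. lpA_feasible q w chi \<longrightarrow> lpA_obj q w chi \<le> 1/2)
   \<and> (\<forall>p q::nat. 1 \<le> p \<and> p \<le> 5 \<and> p \<le> q \<and> q \<le> 10 \<longrightarrow>
        (\<forall>w chi. lpB_feasible p q w chi \<longrightarrow> lpB_obj p q w chi \<le> 1/2))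
   \<and> (\<forall>(V::'v set) E k ell xv xe e dflt.
        edge_colored_graph V E k ell \<and> minecc_lp_feasible V E k ell xv xe \<and> e \<in> E \<and>
        xe e = Max ((\<lambda>w. xv w (ell e)) ` e) \<and> 1/8 < xe e \<and> xe e < 3/4 \<and>
        (\<forall>rho prm w. dflt rho prm w \<in> {1..k}) \<and>
        (\<forall>prm w. (\<lambda>rho. dflt rho prm w) \<in> borel_measurable borel) \<longrightarrow>
        gcr_mistake_prob (1/2) (7/8) k xv dflt ell e \<le> 4/3 * xe e)"
  using partA partB part3 by blast

end
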